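(* Let $n \ge 1$ be an integer. Let $\mathcal{A}_3(n)$ be the set of all $3 \times n$ matrices $M=(m_{j,i})$ with entries in $\{0,1,2\}$ such that all three rows of $M$ have the same valuation, i.e. $\sum_{i=1}^{n} m_{1,i}2^{i-1} = \sum_{i=1}^{n} m_{2,i}2^{i-1} = \sum_{i=1}^{n} m_{3,i}2^{i-1}$. Let $\mathcal{S}(n)$ be the set of words $w_1w_2\cdots w_n$ of length $n$ over the alphabet $\{1,2,3,4,5,6,7\}$ whose last letter $w_n$ lies in $\{1,2,3\}$. Then there exists a bijection between $\mathcal{A}_3(n)$ and $\mathcal{S}(n)$.
   Context: For a vector $a=(a_1,\dots,a_n)\in\{0,1,2\}^n$, its valuation is $v(a)=\sum_{i=1}^n a_i 2^{i-1}$. The set $\mathcal{A}_3(n)$ consists of $3\times n$ matrices with entries in $\{0,1,2\}$ whose three rows, viewed as vectors in $\{0,1,2\}^n$, all have equal valuation. Equivalently, $|\mathcal{A}_3(n)|=\sum_k a(n,k)^3$ where $\sum_{k=0}^{2(2^n-1)} a(n,k)x^k=\prod_{i=0}^{n-1}(1+x^{2^i}+x^{2\cdot 2^i})$ (the $n$-th row of Stern's diatomic array). *)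

theory Defs
  imports Main
begin

text \<open>Valuation of a row: entries indexed 0..n-1 (column i+1 of the paper is index i).\<close>
definition valuation :: "nat \<Rightarrow> (nat \<Rightarrow> nat) \<Rightarrow> nat" where
  "valuation n a = (\<Sum>i<n. a i * 2 ^ i)"

text \<open>A 3 x n matrix is a function M j i (row j < 3, column i < n), extensional
  (zero outside the index range) so that distinct matrices are distinct functions.\<close>
definition A3 :: "nat \<Rightarrow> (nat \<Rightarrow> nat \<Rightarrow> nat) set" where
  "A3 n = {M. (\<forall>j i. (j < 3 \<and> i < n \<longrightarrow> M j i \<in> {0,1,2}) \<and>
                       (\<not> (j < 3 \<and> i < n) \<longrightarrow> M j i = 0)) \<and>
              valuation n (M 0) = valuation n (M 1) \<and>
              valuation n (M 1) = valuation n (M 2)}"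

text \<open>Words of length n over {1,...,7}, letter w_(i+1) stored at index i,
  extensional (0 outside), with last letter in {1,2,3}.\<close>
definition S :: "nat \<Rightarrow> (nat \<Rightarrow> nat) set" where
  "S n = {w. (\<forall>i. (i < n \<longrightarrow> w i \<in> {1..7}) \<and> (n \<le> i \<longrightarrow> w i = 0)) \<and>
             w (n - 1) \<in> {1,2,3}}"

end

theory Submission
  imports Defs
begin


definition Wd :: "nat \<Rightarrow> (nat \<Rightarrow> nat set) \<Rightarrow> (nat \<Rightarrow> nat) set" where
  "Wd n F = {w. \<forall>i. (i < n \<longrightarrow> w i \<in> F i) \<and> (n \<le> i \<longrightarrow> w i = 0)}"

lemma Wd_Suc: "Wd (Suc n) F = (\<lambda>(w,x). w(n:=x)) ` (Wd n F \<times> F n)"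
proof (rule set_eqI, rule iffI)
  fix w assume w: "w \<in> Wd (Suc n) F"
  have "w = (\<lambda>(w,x). w(n:=x)) (w(n:=0), w n)" by auto
  moreover have "(w(n:=0), w n) \<in> Wd n F \<times> F n" using w unfolding Wd_def
    by (auto simp: less_Suc_eq le_Suc_eq)
  ultimately show "w \<in> (\<lambda>(w,x). w(n:=x)) ` (Wd n F \<times> F n)" by blast
next
  fix w assume "w \<in> (\<lambda>(w,x). w(n:=x)) ` (Wd n F \<times> F n)"
  then show "w \<in> Wd (Suc n) F" unfolding Wd_def by (auto simp: less_Suc_eq)
qed

lemma Wd_inj: "inj_on (\<lambda>(w,x). w(n:=x)) (Wd n F \<times> F n)"
proof (rule inj_onI, clarsimp)
  fix w x w' x' assume "w \<in> Wd n F" "w' \<in> Wd n F" and eq: "w(n := x) = w'(n := x')"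
  then have "w n = 0" "w' n = 0" unfolding Wd_def by auto
  from eq have "x = x'" by (metis fun_upd_same)
  moreover have "w = w'"
  proof
    fix i show "w i = w' i" using eq \<open>w n = 0\<close> \<open>w' n = 0\<close>
      by (cases "i = n") (auto dest: fun_cong[of _ _ i])
  qed
  ultimately show "w = w' \<and> x = x'" by simp
qed

lemma Wd_card: "(\<And>i. finite (F i)) \<Longrightarrow> finite (Wd n F) \<and> card (Wd n F) = (\<Prod>i<n. card (F i))"
proof (induction n)
  case 0
  have "Wd 0 F = {\<lambda>_. 0}" unfolding Wd_def by auto
  then show ?case by simp
next
  case (Suc n)
  then show ?case using Wd_inj[of n F]
    by (simp add: Wd_Suc card_image card_cartesian_product)
qed

lemma S_card: assumes "n \<ge> 1" shows "finite (S n) \<and> card (S n) = 3 * 7^(n-1)"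
proof -
  obtain m where m: "n = Suc m" using assms by (cases n) auto
  define F where "F = (\<lambda>i. if i = m then {1::nat,2,3} else {1..7})"
  have "S n = Wd n F" unfolding S_def Wd_def F_def m by (auto simp: less_Suc_eq)
  moreover have "(\<Prod>i<n. card (F i)) = 3 * 7^(n-1)"
  proof -
    have "(\<Prod>i<m. card (F i)) = (\<Prod>i<m. 7)" by (rule prod.cong) (auto simp: F_def)
    then show ?thesis by (simp add: m F_def)
  qed
  moreover have "\<And>i. finite (F i)" by (simp add: F_def)
  ultimately show ?thesis using Wd_card[of F n] by simp
qed



definition G :: "nat \<Rightarrow> int \<Rightarrow> int \<Rightarrow> (nat \<Rightarrow> nat \<Rightarrow> nat) set" where
  "G n e1 e2 = {M. (\<forall>j i. (j < 3 \<and> i < n \<longrightarrow> M j i \<le> 2) \<and> (\<not> (j < 3 \<and> i < n) \<longrightarrow> M j i = 0)) \<and>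
     int (valuation n (M 0)) + e1 = int (valuation n (M 1)) \<and>
     int (valuation n (M 1)) + e2 = int (valuation n (M 2))}"

definition col :: "nat \<times> nat \<times> nat \<Rightarrow> nat \<Rightarrow> nat" where
  "col c j = (case c of (a,b,d) \<Rightarrow> if j = 0 then a else if j = 1 then b else d)"

definition cons :: "nat \<times> nat \<times> nat \<Rightarrow> (nat \<Rightarrow> nat \<Rightarrow> nat) \<Rightarrow> nat \<Rightarrow> nat \<Rightarrow> nat" where
  "cons c M j i = (if j < 3 then (if i = 0 then col c j else M j (i - 1)) else 0)"

definition cols :: "(nat \<times> nat \<times> nat) set" where
  "cols = {0,1,2} \<times> {0,1,2} \<times> {0,1,2}"

definition ok :: "int \<Rightarrow> int \<Rightarrow> nat \<times> nat \<times> nat \<Rightarrow> bool" where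
  "ok e1 e2 c = (case c of (a,b,d) \<Rightarrow> even (int a + e1 - int b) \<and> even (int b + e2 - int d))"

definition n1 :: "int \<Rightarrow> nat \<times> nat \<times> nat \<Rightarrow> int" where
  "n1 e1 c = (case c of (a,b,d) \<Rightarrow> (int a + e1 - int b) div 2)"
definition n2 :: "int \<Rightarrow> nat \<times> nat \<times> nat \<Rightarrow> int" where
  "n2 e2 c = (case c of (a,b,d) \<Rightarrow> (int b + e2 - int d) div 2)"

lemma le2: "(x::nat) \<le> 2 \<longleftrightarrow> x \<in> {0,1,2}" by auto

lemma par: assumes "(a::int) + 2*x + e = b + 2*y" shows "even (a + e - b)" "x + (a+e-b) div 2 = y"
proof -
  have h: "a+e-b = 2*(y-x)" using assms by simp
  show "even (a + e - b)" unfolding h by simp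
  show "x + (a+e-b) div 2 = y" unfolding h by simp
qed

lemma par2: assumes "even ((a::int) + e - b)" "x + (a+e-b) div 2 = y" shows "a + 2*x + e = b + 2*y"
proof -
  obtain k where k: "a + e - b = 2*k" using assms(1) by blast
  have "x + k = y" using assms(2) unfolding k by simp
  then show ?thesis using k by linarith
qed

lemma val_Suc: "valuation (Suc n) a = a 0 + 2 * valuation n (\<lambda>i. a (Suc i))"
  unfolding valuation_def sum.lessThan_Suc_shift by (simp add: sum_distrib_left mult_ac)

lemma G_0: "G 0 e1 e2 = (if e1 = 0 \<and> e2 = 0 then {\<lambda>_ _. 0} else {})"
  unfolding G_def valuation_def by (auto simp: fun_eq_iff)

lemma G_Suc: "G (Suc n) e1 e2 = (\<Union>c\<in>{c\<in>cols. ok e1 e2 c}. cons c ` G n (n1 e1 c) (n2 e2 c))"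
proof (rule set_eqI, rule iffI)
  fix M assume M: "M \<in> G (Suc n) e1 e2"
  define c where "c = (M 0 0, M 1 0, M 2 0)"
  define M' where "M' = (\<lambda>j i. M j (Suc i))"
  have Mext: "\<And>j i. \<not> (j < 3 \<and> i < Suc n) \<Longrightarrow> M j i = 0" and bd: "\<And>j i. j < 3 \<Longrightarrow> i < Suc n \<Longrightarrow> M j i \<le> 2"
    using M unfolding G_def by auto
  have v: "\<And>j. valuation (Suc n) (M j) = M j 0 + 2 * valuation n (M' j)"
    by (simp add: val_Suc M'_def)
  have e1: "int (M 0 0) + 2 * int (valuation n (M' 0)) + e1 = int (M 1 0) + 2 * int (valuation n (M' 1))"
    and e2: "int (M 1 0) + 2 * int (valuation n (M' 1)) + e2 = int (M 2 0) + 2 * int (valuation n (M' 2))"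
    using M v[of 0] v[of 1] v[of 2] unfolding G_def by auto
  have "c \<in> cols" unfolding c_def cols_def using bd[of 0 0] bd[of 1 0] bd[of 2 0] unfolding le2
    by (intro SigmaI) auto
  moreover have "ok e1 e2 c" unfolding ok_def c_def using par(1)[OF e1] par(1)[OF e2] by simp
  moreover have "M' \<in> G n (n1 e1 c) (n2 e2 c)"
    unfolding G_def n1_def n2_def c_def using par(2)[OF e1] par(2)[OF e2] Mext bd
    by (auto simp: M'_def)
  moreover have "M = cons c M'"
  proof (intro ext)
    fix j i show "M j i = cons c M' j i"
    proof (cases "j < 3")
      case True
      then have "j = 0 \<or> j = 1 \<or> j = 2" by auto
      then show ?thesis using True unfolding cons_def col_def c_def M'_def
        by (cases i) auto
    next
      case False then show ?thesis using Mext[of j i] by (simp add: cons_def)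
    qed
  qed
  ultimately show "M \<in> (\<Union>c\<in>{c\<in>cols. ok e1 e2 c}. cons c ` G n (n1 e1 c) (n2 e2 c))" by blast
next
  fix M assume "M \<in> (\<Union>c\<in>{c\<in>cols. ok e1 e2 c}. cons c ` G n (n1 e1 c) (n2 e2 c))"
  then obtain c M' where c: "c \<in> cols" "ok e1 e2 c" and M': "M' \<in> G n (n1 e1 c) (n2 e2 c)"
    and M: "M = cons c M'" by blast
  obtain a b d where abd: "c = (a,b,d)" by (cases c) auto
  have v: "\<And>j. j < 3 \<Longrightarrow> valuation (Suc n) (M j) = col c j + 2 * valuation n (M' j)"
    by (simp add: val_Suc M cons_def)
  have M'b: "\<And>j i. j < 3 \<Longrightarrow> i < n \<Longrightarrow> M' j i \<le> 2"
   and M'e: "\<And>j i. \<not> (j < 3 \<and> i < n) \<Longrightarrow> M' j i = 0"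
   and M'1: "int (valuation n (M' 0)) + n1 e1 c = int (valuation n (M' 1))"
   and M'2: "int (valuation n (M' 1)) + n2 e2 c = int (valuation n (M' 2))"
    using M' unfolding G_def by auto
  have cb: "\<And>j. col c j \<le> 2" using c(1) unfolding abd cols_def col_def by auto
  have ok1: "even (int a + e1 - int b)" and ok2: "even (int b + e2 - int d)"
    using c(2) unfolding ok_def abd by auto
  have w1: "int a + 2 * int (valuation n (M' 0)) + e1 = int b + 2 * int (valuation n (M' 1))"
    by (rule par2[OF ok1]) (use M'1 in \<open>simp add: n1_def abd\<close>)
  have w2: "int b + 2 * int (valuation n (M' 1)) + e2 = int d + 2 * int (valuation n (M' 2))"
    by (rule par2[OF ok2]) (use M'2 in \<open>simp add: n2_def abd\<close>)
  have bnd: "\<forall>j i. (j < 3 \<and> i < Suc n \<longrightarrow> M j i \<le> 2) \<and> (\<not> (j < 3 \<and> i < Suc n) \<longrightarrow> M j i = 0)"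
  proof (intro allI conjI impI)
    fix j i :: nat assume "j < 3 \<and> i < Suc n" then show "M j i \<le> 2"
      using cb M'b[of j "i-1"] by (cases i) (auto simp: M cons_def)
  next
    fix j i :: nat assume "\<not> (j < 3 \<and> i < Suc n)" then show "M j i = 0"
      using M'e[of j "i-1"] by (cases i) (auto simp: M cons_def)
  qed
  show "M \<in> G (Suc n) e1 e2"
    unfolding G_def using bnd v[of 0] v[of 1] v[of 2] w1 w2 by (simp add: col_def abd)
qed

lemma finite_cols: "finite cols" unfolding cols_def by simp

lemma G_finite: "finite (G n e1 e2)"
proof (induction n arbitrary: e1 e2)
  case 0 then show ?case by (simp add: G_0)
next
  case (Suc n) then show ?case unfolding G_Suc using finite_cols by auto
qed

lemma cons_inj: "inj_on (cons c) (G n e1 e2)"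
proof (rule inj_onI)
  fix M M' assume M: "M \<in> G n e1 e2" and M': "M' \<in> G n e1 e2" and eq: "cons c M = cons c M'"
  show "M = M'"
  proof (intro ext)
    fix j i :: nat
    show "M j i = M' j i"
    proof (cases "j < 3")
      case True
      then show ?thesis using fun_cong[OF fun_cong[OF eq, of j], of "Suc i"] by (simp add: cons_def)
    next
      case False then show ?thesis using M M' unfolding G_def by auto
    qed
  qed
qed

lemma col_eq: "(\<And>j. j < 3 \<Longrightarrow> col c j = col c' j) \<Longrightarrow> c = c'"
proof -
  assume h: "\<And>j. j < 3 \<Longrightarrow> col c j = col c' j"
  obtain a b d where c: "c = (a,b,d)" by (cases c) auto
  obtain a' b' d' where c': "c' = (a',b',d')" by (cases c') auto
  show ?thesis using h[of 0] h[of 1] h[of 2] unfolding c c' col_def by simp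
qed

lemma card_G_Suc: "card (G (Suc n) e1 e2) = (\<Sum>c\<in>cols. if ok e1 e2 c then card (G n (n1 e1 c) (n2 e2 c)) else 0)"
proof -
  have "card (G (Suc n) e1 e2) = (\<Sum>c\<in>{c\<in>cols. ok e1 e2 c}. card (cons c ` G n (n1 e1 c) (n2 e2 c)))"
    unfolding G_Suc
  proof (rule card_UN_disjoint)
    show "finite {c \<in> cols. ok e1 e2 c}" using finite_cols by simp
    show "\<forall>c\<in>{c \<in> cols. ok e1 e2 c}. finite (cons c ` G n (n1 e1 c) (n2 e2 c))" using G_finite by simp
    show "\<forall>c\<in>{c \<in> cols. ok e1 e2 c}. \<forall>c'\<in>{c \<in> cols. ok e1 e2 c}. c \<noteq> c' \<longrightarrow>
      cons c ` G n (n1 e1 c) (n2 e2 c) \<inter> cons c' ` G n (n1 e1 c') (n2 e2 c') = {}"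
    proof (intro ballI impI)
      fix c c' :: "nat \<times> nat \<times> nat" assume "c \<noteq> c'"
      show "cons c ` G n (n1 e1 c) (n2 e2 c) \<inter> cons c' ` G n (n1 e1 c') (n2 e2 c') = {}"
      proof (rule ccontr)
        assume "cons c ` G n (n1 e1 c) (n2 e2 c) \<inter> cons c' ` G n (n1 e1 c') (n2 e2 c') \<noteq> {}"
        then obtain M M' where "cons c M = cons c' M'" by blast
        then have "\<And>j. j < 3 \<Longrightarrow> col c j = col c' j"
        proof -
          fix j :: nat assume "j < 3"
          have "cons c M j 0 = cons c' M' j 0" using \<open>cons c M = cons c' M'\<close> by simp
          then show "col c j = col c' j" using \<open>j < 3\<close> by (simp add: cons_def)
        qed
        then show False using col_eq \<open>c \<noteq> c'\<close> by blast
      qed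
    qed
  qed
  also have "\<dots> = (\<Sum>c\<in>{c\<in>cols. ok e1 e2 c}. card (G n (n1 e1 c) (n2 e2 c)))"
    using cons_inj by (simp add: card_image)
  also have "\<dots> = (\<Sum>c\<in>cols. if ok e1 e2 c then card (G n (n1 e1 c) (n2 e2 c)) else 0)"
    using finite_cols by (simp add: sum.inter_filter)
  finally show ?thesis .
qed

lemma sum_cols: "sum f cols = (\<Sum>a\<in>{0,1,2}. \<Sum>b\<in>{0,1,2}. \<Sum>d\<in>{0,1,2}. f (a,b,d))"
  unfolding cols_def sum.cartesian_product by simp

lemma card_G_Suc': "card (G (Suc n) e1 e2) = (\<Sum>a\<in>{0,1,2}. \<Sum>b\<in>{0,1,2}. \<Sum>d\<in>{0,1,2}.
   if even (int a + e1 - int b) \<and> even (int b + e2 - int d) then card (G n ((int a + e1 - int b) div 2) ((int b + e2 - int d) div 2)) else 0)"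
  unfolding card_G_Suc sum_cols by (simp add: ok_def n1_def n2_def)

lemma counts: "card (G (Suc n) 0 0) = 3*7^n \<and> card (G (Suc n) (-1) 0) = 2*7^n \<and> card (G (Suc n) 1 0) = 2*7^n \<and>
  card (G (Suc n) 0 (-1)) = 2*7^n \<and> card (G (Suc n) 0 1) = 2*7^n \<and> card (G (Suc n) (-1) 1) = 2*7^n \<and>
  card (G (Suc n) 1 (-1)) = 2*7^n"
proof (induction n)
  case 0 then show ?case by (simp add: card_G_Suc'[of 0] G_0)
next
  case (Suc n) then show ?case by (simp add: card_G_Suc'[of "Suc n"])
qed


lemma A3_G: "A3 n = G n 0 0"
  unfolding A3_def G_def by (auto simp: le2)

theorem mainTheorem1:
  fixes n :: nat
  assumes "n \<ge> 1"
  shows "\<exists>f. bij_betw f (A3 n) (S n)"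
proof -
  obtain m where m: "n = Suc m" using assms by (cases n) auto
  have "card (A3 n) = 3 * 7^(n-1)" using counts[of m] by (simp add: A3_G m)
  moreover have "finite (A3 n)" by (simp add: A3_G G_finite)
  ultimately show ?thesis using S_card[OF assms] finite_same_card_bij by metis
qed

end
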